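(* Let $G = K \rtimes_\varphi \langle t\rangle$ be a finitely generated group, where $K$ is abelian, $\langle t\rangle$ is infinite cyclic and $\varphi\in\mathrm{Aut}(K)$, and let $S$ be a finite symmetric generating set of $G$. Let $P_\varphi=\{a\in K:\ \varphi^n(a)=a\text{ for some } n\ge1\}$. Then the relative growth $r\mapsto |P_\varphi\cap S^r|$ is bounded above by a polynomial in $r$.
   Context: $K$ is written additively and $tkt^{-1}=\varphi(k)$. $S^r$ is the set of elements of word length at most $r$ with respect to $S$. *)

theory Defs
  imports Main "HOL-Computational_Algebra.Polynomial"
begin

text \<open>The semidirect product G = K \<rtimes>_phi <t> is modelled concretely on K \<times> int:
  the pair (a, m) stands for a t^m, so that t k t^-1 = phi k gives
  (a, m) * (b, n) = (a + phi^m b, m + n).\<close>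

definition phi_pow :: "('k \<Rightarrow> 'k) \<Rightarrow> int \<Rightarrow> 'k \<Rightarrow> 'k" where
  "phi_pow phi m = (if 0 \<le> m then phi ^^ nat m else inv phi ^^ nat (- m))"

definition sdp_mult :: "('k::ab_group_add \<Rightarrow> 'k) \<Rightarrow> 'k \<times> int \<Rightarrow> 'k \<times> int \<Rightarrow> 'k \<times> int" where
  "sdp_mult phi x y = (fst x + phi_pow phi (snd x) (fst y), snd x + snd y)"

definition sdp_one :: "'k::ab_group_add \<times> int" where
  "sdp_one = (0, 0)"

definition sdp_inv :: "('k::ab_group_add \<Rightarrow> 'k) \<Rightarrow> 'k \<times> int \<Rightarrow> 'k \<times> int" where
  "sdp_inv phi x = (- phi_pow phi (- snd x) (fst x), - snd x)"

definition is_aut :: "('k::ab_group_add \<Rightarrow> 'k) \<Rightarrow> bool" where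
  "is_aut phi \<longleftrightarrow> bij phi \<and> (\<forall>a b. phi (a + b) = phi a + phi b)"

fun word_ball :: "('k::ab_group_add \<Rightarrow> 'k) \<Rightarrow> ('k \<times> int) set \<Rightarrow> nat \<Rightarrow> ('k \<times> int) set" where
  "word_ball phi S 0 = {sdp_one}"
| "word_ball phi S (Suc r) = word_ball phi S r \<union> {sdp_mult phi x s | x s. x \<in> word_ball phi S r \<and> s \<in> S}"

definition symmetric_set :: "('k::ab_group_add \<Rightarrow> 'k) \<Rightarrow> ('k \<times> int) set \<Rightarrow> bool" where
  "symmetric_set phi S \<longleftrightarrow> (\<forall>s\<in>S. sdp_inv phi s \<in> S)"

text \<open>S generates G (for symmetric S: every element is a finite product of elements of S).\<close>
definition generates :: "('k::ab_group_add \<Rightarrow> 'k) \<Rightarrow> ('k \<times> int) set \<Rightarrow> bool" where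
  "generates phi S \<longleftrightarrow> (\<forall>g. \<exists>r. g \<in> word_ball phi S r)"

definition periodic_pts :: "('k \<Rightarrow> 'k) \<Rightarrow> 'k set" where
  "periodic_pts phi = {a. \<exists>n\<ge>1. (phi ^^ n) a = a}"

end

theory Submission
  imports Defs "HOL-Library.FuncSet"
begin


section \<open>Integer scaling in abelian groups\<close>

primrec nsc :: "nat \<Rightarrow> 'k::ab_group_add \<Rightarrow> 'k" where
  "nsc 0 x = 0"
| "nsc (Suc k) x = x + nsc k x"

lemma nsc_add: "nsc (m + k) x = nsc m x + nsc k x"
  by (induct m) (simp_all add: add.assoc)

lemma nsc_plus: "nsc k (x + y) = nsc k x + nsc k y"
  by (induct k) (simp_all add: algebra_simps)

lemma nsc_zero[simp]: "nsc k 0 = 0"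
  by (induct k) simp_all

definition addf :: "('k::ab_group_add \<Rightarrow> 'k) \<Rightarrow> bool" where
  "addf f \<longleftrightarrow> (\<forall>x y. f (x + y) = f x + f y)"

lemma addf_0: "addf f \<Longrightarrow> f 0 = 0"
  unfolding addf_def by (metis add_cancel_right_right)

lemma addf_add: "addf f \<Longrightarrow> f (x + y) = f x + f y"
  unfolding addf_def by blast

lemma addf_minus: "addf f \<Longrightarrow> f (- x) = - f x"
  by (metis addf_0 addf_add add.right_inverse eq_neg_iff_add_eq_0)

lemma addf_diff: "addf f \<Longrightarrow> f (x - y) = f x - f y"
  by (metis addf_add addf_minus diff_conv_add_uminus)

lemma addf_sum: "addf f \<Longrightarrow> f (sum g A) = (\<Sum>a\<in>A. f (g a))"
  by (induct A rule: infinite_finite_induct) (simp_all add: addf_0 addf_add)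

lemma addf_sum_list: "addf f \<Longrightarrow> f (sum_list xs) = sum_list (map f xs)"
  by (induct xs) (simp_all add: addf_0 addf_add)

lemma addf_nsc: "addf f \<Longrightarrow> f (nsc k x) = nsc k (f x)"
  by (induct k) (simp_all add: addf_0 addf_add)

lemma addf_comp: "addf f \<Longrightarrow> addf g \<Longrightarrow> addf (f \<circ> g)"
  unfolding addf_def by simp

lemma addf_funpow: "addf f \<Longrightarrow> addf (f ^^ n)"
  by (induct n) (simp_all add: addf_def)

definition zsc :: "int \<Rightarrow> 'k::ab_group_add \<Rightarrow> 'k" where
  "zsc n x = nsc (nat n) x - nsc (nat (- n)) x"

lemma nsc_eq_diff:
  assumes "int a - int b = int c - int d"
  shows "nsc a x - nsc b x = nsc c x - nsc d x"
proof -
  have "a + d = c + b" using assms by linarith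
  hence "nsc (a + d) x = nsc (c + b) x" by simp
  hence "nsc a x + nsc d x = nsc c x + nsc b x" by (simp add: nsc_add)
  thus ?thesis by (simp add: algebra_simps)
qed

lemma zsc_add: "zsc (m + n) x = zsc m x + zsc n x"
proof -
  have "nsc (nat (m + n)) x - nsc (nat (- (m + n))) x
      = nsc (nat m + nat n) x - nsc (nat (- m) + nat (- n)) x"
    by (rule nsc_eq_diff) simp
  thus ?thesis unfolding zsc_def by (simp add: nsc_add algebra_simps)
qed

lemma zsc_0[simp]: "zsc 0 x = 0"
  by (simp add: zsc_def)

lemma zsc_1[simp]: "zsc 1 x = x"
  by (simp add: zsc_def)

lemma zsc_of_nat: "zsc (int k) x = nsc k x"
  by (simp add: zsc_def)

lemma zsc_uminus: "zsc (- n) x = - zsc n x"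
  by (simp add: zsc_def)

lemma zsc_diff: "zsc (m - n) x = zsc m x - zsc n x"
  by (metis diff_conv_add_uminus zsc_add zsc_uminus)

lemma zsc_plus: "zsc n (x + y) = zsc n x + zsc n y"
  by (simp add: zsc_def nsc_plus algebra_simps)

lemma zsc_zero[simp]: "zsc n 0 = 0"
  by (simp add: zsc_def)

lemma addf_zsc_left: "addf (zsc n)"
  by (simp add: addf_def zsc_plus)

lemma addf_zsc: "addf f \<Longrightarrow> f (zsc n x) = zsc n (f x)"
  by (simp add: zsc_def addf_diff addf_nsc)

lemma zsc_mult_nat: "zsc (m * int k) y = zsc m (nsc k y)"
proof (induct k)
  case 0 then show ?case by simp
next
  case (Suc k)
  have "zsc (m * int (Suc k)) y = zsc (m * int k + m) y" by (simp add: algebra_simps)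
  also have "\<dots> = zsc m (nsc k y) + zsc m y" by (simp add: zsc_add Suc)
  also have "\<dots> = zsc m (nsc (Suc k) y)" by (simp add: zsc_plus add.commute)
  finally show ?case .
qed

lemma zsc_mult: "zsc (m * n) y = zsc m (zsc n y)"
proof -
  have "zsc m (zsc n y) = zsc m (nsc (nat n) y) - zsc m (nsc (nat (-n)) y)"
    unfolding zsc_def[of n] by (simp add: addf_diff[OF addf_zsc_left])
  also have "\<dots> = zsc (m * int (nat n)) y - zsc (m * int (nat (-n))) y"
    by (simp only: zsc_mult_nat)
  also have "\<dots> = zsc (m * int (nat n) - m * int (nat (-n))) y" by (simp add: zsc_diff)
  also have "m * int (nat n) - m * int (nat (-n)) = m * n"
    by (cases "n \<ge> 0") (simp_all add: algebra_simps)
  finally show ?thesis by (rule sym)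
qed

section \<open>Automorphism and polynomial action\<close>

locale autK =
  fixes phi :: "'k::ab_group_add \<Rightarrow> 'k"
  assumes aut: "is_aut phi"
begin

abbreviation "psi \<equiv> inv phi"

lemma bij_phi: "bij phi" using aut by (simp add: is_aut_def)

lemma addf_phi: "addf phi" using aut by (simp add: is_aut_def addf_def)

lemma phi_psi[simp]: "phi (psi x) = x"
  using bij_phi by (simp add: bij_is_surj surj_f_inv_f)

lemma psi_phi[simp]: "psi (phi x) = x"
  using bij_phi by (simp add: bij_is_inj inv_f_f)

lemma addf_psi: "addf psi"
  unfolding addf_def
proof (intro allI)
  fix x y
  have "phi (psi x + psi y) = x + y" using addf_phi by (simp add: addf_add)
  hence "psi (phi (psi x + psi y)) = psi (x + y)" by simp
  thus "psi (x + y) = psi x + psi y" by simp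
qed

lemma phi_psi_pow[simp]: "(phi ^^ n) ((psi ^^ n) x) = x"
proof (induct n arbitrary: x)
  case 0 then show ?case by simp
next
  case (Suc n)
  have h1: "(psi ^^ Suc n) x = psi ((psi ^^ n) x)" by simp
  have h2: "\<And>y. (phi ^^ Suc n) y = (phi ^^ n) (phi y)" by (simp only: funpow_Suc_right o_apply)
  have "(phi ^^ Suc n) ((psi ^^ Suc n) x) = (phi ^^ n) (phi (psi ((psi ^^ n) x)))"
    by (simp only: h1 h2)
  also have "\<dots> = x" using Suc by simp
  finally show ?case .
qed

lemma psi_phi_pow[simp]: "(psi ^^ n) ((phi ^^ n) x) = x"
proof (induct n arbitrary: x)
  case 0 then show ?case by simp
next
  case (Suc n)
  have h1: "(phi ^^ Suc n) x = phi ((phi ^^ n) x)" by simp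
  have h2: "\<And>y. (psi ^^ Suc n) y = (psi ^^ n) (psi y)" by (simp only: funpow_Suc_right o_apply)
  have "(psi ^^ Suc n) ((phi ^^ Suc n) x) = (psi ^^ n) (psi (phi ((phi ^^ n) x)))"
    by (simp only: h1 h2)
  also have "\<dots> = x" using Suc by simp
  finally show ?case .
qed

lemma phi_pow_comm: "(phi ^^ n) (phi x) = phi ((phi ^^ n) x)"
  by (metis comp_apply funpow_Suc_right funpow.simps(2))

definition ev :: "int poly \<Rightarrow> 'k \<Rightarrow> 'k" where
  "ev p x = (\<Sum>i\<le>degree p. zsc (coeff p i) ((phi ^^ i) x))"

lemma ev_le:
  assumes "degree p \<le> n"
  shows "ev p x = (\<Sum>i\<le>n. zsc (coeff p i) ((phi ^^ i) x))"
proof -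
  have "(\<Sum>i\<le>n. zsc (coeff p i) ((phi ^^ i) x)) = (\<Sum>i\<le>degree p. zsc (coeff p i) ((phi ^^ i) x))"
    using assms
    by (intro sum.mono_neutral_right) (auto simp: coeff_eq_0)
  thus ?thesis by (simp add: ev_def)
qed

lemma addf_ev: "addf (ev p)"
  unfolding addf_def ev_def
  by (simp add: addf_add[OF addf_funpow[OF addf_phi]] zsc_plus sum.distrib)

lemma ev_0[simp]: "ev 0 x = 0"
  by (simp add: ev_def)

lemma ev_add: "ev (p + q) x = ev p x + ev q x"
proof -
  let ?n = "max (degree p) (degree q)"
  have "ev (p + q) x = (\<Sum>i\<le>?n. zsc (coeff (p + q) i) ((phi ^^ i) x))"
    by (rule ev_le) (simp add: degree_add_le)
  also have "\<dots> = (\<Sum>i\<le>?n. zsc (coeff p i) ((phi ^^ i) x)) + (\<Sum>i\<le>?n. zsc (coeff q i) ((phi ^^ i) x))"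
    by (simp add: zsc_add sum.distrib)
  also have "\<dots> = ev p x + ev q x" using ev_le[of p ?n x] ev_le[of q ?n x] by simp
  finally show ?thesis .
qed

lemma ev_smult: "ev (smult c p) x = zsc c (ev p x)"
proof -
  have "ev (smult c p) x = (\<Sum>i\<le>degree p. zsc (coeff (smult c p) i) ((phi ^^ i) x))"
    by (rule ev_le) (simp add: degree_smult_le)
  also have "\<dots> = zsc c (ev p x)"
    by (simp add: ev_def zsc_mult addf_sum[OF addf_zsc_left])
  finally show ?thesis .
qed

lemma ev_minus: "ev (- p) x = - ev p x"
proof -
  have "ev (- p) x = ev (smult (-1) p) x" by simp
  also have "\<dots> = zsc (-1) (ev p x)" by (rule ev_smult)
  also have "\<dots> = - ev p x" by (simp add: zsc_uminus)
  finally show ?thesis .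
qed

lemma ev_diff: "ev (p - q) x = ev p x - ev q x"
  by (metis diff_conv_add_uminus ev_add ev_minus)

lemma ev_pCons: "ev (pCons c p) x = zsc c x + phi (ev p x)"
proof -
  have "ev (pCons c p) x = (\<Sum>i\<le>Suc (degree p). zsc (coeff (pCons c p) i) ((phi ^^ i) x))"
    by (rule ev_le) (simp add: degree_pCons_le)
  also have "\<dots> = zsc c x + (\<Sum>i\<le>degree p. zsc (coeff p i) ((phi ^^ Suc i) x))"
    by (subst sum.atMost_Suc_shift) simp
  also have "(\<Sum>i\<le>degree p. zsc (coeff p i) ((phi ^^ Suc i) x)) = phi (ev p x)"
    by (simp add: ev_def addf_sum[OF addf_phi] addf_zsc[OF addf_phi])
  finally show ?thesis .
qed

lemma ev_const[simp]: "ev [:c:] x = zsc c x"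
  by (simp add: ev_def)

lemma ev_one[simp]: "ev 1 x = x"
  by (simp add: one_pCons)

lemma ev_mult: "ev (p * q) x = ev p (ev q x)"
proof (induct p)
  case 0 then show ?case by (simp add: ev_def)
next
  case (pCons c p)
  have "ev (pCons c p * q) x = ev (smult c q + pCons 0 (p * q)) x" by simp
  also have "\<dots> = zsc c (ev q x) + phi (ev (p * q) x)" by (simp add: ev_add ev_smult ev_pCons)
  also have "\<dots> = ev (pCons c p) (ev q x)" by (simp add: ev_pCons pCons)
  finally show ?case .
qed

lemma ev_monom: "ev (monom 1 k) x = (phi ^^ k) x"
proof (induct k arbitrary: x)
  case 0 then show ?case by (simp add: monom_0)
next
  case (Suc k)
  have "monom (1::int) (Suc k) = pCons 0 (monom 1 k)" by (simp add: monom_Suc)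
  then show ?case by (simp add: ev_pCons Suc)
qed

lemma ev_phi: "ev p (phi x) = phi (ev p x)"
  by (simp add: ev_def addf_sum[OF addf_phi] addf_zsc[OF addf_phi] phi_pow_comm)

lemma ev_psi: "ev p (psi x) = psi (ev p x)"
  by (metis ev_phi phi_psi psi_phi)

lemma ev_psi_pow: "ev p ((psi ^^ j) x) = (psi ^^ j) (ev p x)"
  by (induct j) (simp_all add: ev_psi)

lemma ev_phi_pow: "ev p ((phi ^^ j) x) = (phi ^^ j) (ev p x)"
  by (induct j) (simp_all add: ev_phi)

end



section \<open>Hilbert basis theorem for Z[x]\<close>

definition iideal :: "int set \<Rightarrow> bool" where
  "iideal I \<longleftrightarrow> 0 \<in> I \<and> (\<forall>x\<in>I. \<forall>y\<in>I. x + y \<in> I) \<and> (\<forall>x\<in>I. \<forall>c. c * x \<in> I)"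

lemma iideal_principal:
  assumes "iideal I"
  shows "\<exists>g\<in>I. \<forall>x\<in>I. g dvd x"
proof (cases "I \<subseteq> {0}")
  case True
  then show ?thesis using assms by (auto simp: iideal_def)
next
  case False
  then obtain x where x: "x \<in> I" "x \<noteq> 0" by auto
  have "\<exists>y\<in>I. y > 0"
  proof (cases "x > 0")
    case True then show ?thesis using x by auto
  next
    case False
    have "(-1) * x \<in> I" using assms x unfolding iideal_def by blast
    then show ?thesis using False x(2) by (intro bexI[of _ "(-1)*x"]) auto
  qed
  then obtain y where y: "y \<in> I" "y > 0" by auto
  define g0 where "g0 = (LEAST n::nat. int n \<in> I \<and> n > 0)"
  define g where "g = int g0"
  have g0I: "int g0 \<in> I \<and> g0 > 0"
    unfolding g0_def by (rule LeastI_ex[of "\<lambda>n::nat. int n \<in> I \<and> n > 0"]) (use y in \<open>auto intro!: exI[of _ "nat y"]\<close>)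
  hence gI: "g \<in> I \<and> g > 0" by (simp add: g_def)
  have gmin: "g \<le> n" if "n \<in> I" "n > 0" for n
  proof -
    have "g0 \<le> nat n" unfolding g0_def by (rule Least_le) (use that in auto)
    thus ?thesis using that by (simp add: g_def)
  qed
  show ?thesis
  proof (intro bexI[of _ g] ballI)
    fix z assume z: "z \<in> I"
    have "(- (z div g)) * g \<in> I" using assms gI unfolding iideal_def by blast
    hence "z + (- (z div g)) * g \<in> I" using assms z by (auto simp: iideal_def)
    moreover have "z + (- (z div g)) * g = z mod g"
      by (simp add: algebra_simps minus_div_mult_eq_mod[symmetric])
    ultimately have m: "z mod g \<in> I" by simp
    have "z mod g < g" "z mod g \<ge> 0" using gI by auto
    with gmin[OF m] have "z mod g = 0" by fastforce
    thus "g dvd z" by auto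
  qed (use gI in auto)
qed

definition pideal :: "int poly set \<Rightarrow> bool" where
  "pideal J \<longleftrightarrow> 0 \<in> J \<and> (\<forall>p\<in>J. \<forall>q\<in>J. p + q \<in> J) \<and> (\<forall>p\<in>J. \<forall>c. smult c p \<in> J)
     \<and> (\<forall>p\<in>J. pCons 0 p \<in> J)"

definition LC :: "nat \<Rightarrow> int poly set \<Rightarrow> int set" where
  "LC d J = {coeff p d | p. p \<in> J \<and> degree p \<le> d}"

lemma pideal_diff: "pideal J \<Longrightarrow> p \<in> J \<Longrightarrow> q \<in> J \<Longrightarrow> p - q \<in> J"
proof -
  assume a: "pideal J" "p \<in> J" "q \<in> J"
  hence "smult (-1) q \<in> J" unfolding pideal_def by blast
  hence "p + smult (-1) q \<in> J" using a unfolding pideal_def by blast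
  thus ?thesis by simp
qed

lemma LC_iideal: "pideal J \<Longrightarrow> iideal (LC d J)"
  unfolding iideal_def LC_def
proof (intro conjI ballI allI)
  assume J: "pideal J"
  show "0 \<in> {coeff p d |p. p \<in> J \<and> degree p \<le> d}"
    using J by (auto simp: pideal_def intro!: exI[of _ 0])
  fix x y assume "x \<in> {coeff p d |p. p \<in> J \<and> degree p \<le> d}" "y \<in> {coeff p d |p. p \<in> J \<and> degree p \<le> d}"
  then obtain p q where "x = coeff p d" "p \<in> J" "degree p \<le> d" "y = coeff q d" "q \<in> J" "degree q \<le> d" by auto
  thus "x + y \<in> {coeff p d |p. p \<in> J \<and> degree p \<le> d}"
    using J by (auto simp: pideal_def intro!: exI[of _ "p + q"] degree_add_le)
next
  assume J: "pideal J"
  fix x c assume "x \<in> {coeff p d |p. p \<in> J \<and> degree p \<le> d}"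
  then obtain p where "x = coeff p d" "p \<in> J" "degree p \<le> d" by auto
  thus "c * x \<in> {coeff p d |p. p \<in> J \<and> degree p \<le> d}"
    using J by (auto simp: pideal_def intro!: exI[of _ "smult c p"] order.trans[OF degree_smult_le])
qed

lemma LC_mono_J: "J \<subseteq> J' \<Longrightarrow> LC d J \<subseteq> LC d J'"
  unfolding LC_def by auto

lemma LC_mono_d: assumes "pideal J" "d \<le> d'" shows "LC d J \<subseteq> LC d' J"
  using assms(2)
proof (induct d' rule: dec_induct)
  case base then show ?case by simp
next
  case (step n)
  have "LC n J \<subseteq> LC (Suc n) J"
  proof
    fix x assume "x \<in> LC n J"
    then obtain p where p: "x = coeff p n" "p \<in> J" "degree p \<le> n" by (auto simp: LC_def)
    have "pCons 0 p \<in> J" using assms(1) p unfolding pideal_def by blast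
    moreover have "degree (pCons 0 p) \<le> Suc n" using p
      by (metis degree_pCons_le le_trans Suc_le_mono)
    moreover have "x = coeff (pCons 0 p) (Suc n)" using p by simp
    ultimately show "x \<in> LC (Suc n) J" unfolding LC_def by blast
  qed
  with step show ?case by auto
qed

lemma LC_equal:
  assumes J: "pideal J" and U: "pideal U" and sub: "J \<subseteq> U"
    and lc: "\<And>d. LC d U \<subseteq> LC d J"
  shows "U \<subseteq> J"
proof -
  have "\<forall>p\<in>U. degree p \<le> d \<longrightarrow> p \<in> J" for d
  proof (induct d)
    case 0
    show ?case
    proof (intro ballI impI)
      fix p assume p: "p \<in> U" "degree p \<le> 0"
      hence "coeff p 0 \<in> LC 0 U" by (auto simp: LC_def)
      hence "coeff p 0 \<in> LC 0 J" using lc by blast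
      then obtain q where q: "q \<in> J" "degree q \<le> 0" "coeff q 0 = coeff p 0"
        by (auto simp: LC_def)
      have "p = q" using p q by (metis degree_0_id le_zero_eq)
      thus "p \<in> J" using q by simp
    qed
  next
    case (Suc d)
    show ?case
    proof (intro ballI impI)
      fix p assume p: "p \<in> U" "degree p \<le> Suc d"
      hence "coeff p (Suc d) \<in> LC (Suc d) U" by (auto simp: LC_def)
      hence "coeff p (Suc d) \<in> LC (Suc d) J" using lc by blast
      then obtain q where q: "q \<in> J" "degree q \<le> Suc d" "coeff q (Suc d) = coeff p (Suc d)"
        by (auto simp: LC_def)
      define r where "r = p - q"
      have rU: "r \<in> U" using p q sub U pideal_diff unfolding r_def by blast
      have rd: "degree r \<le> Suc d" using p q unfolding r_def by (meson degree_diff_le)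
      have rc: "coeff r (Suc d) = 0" using q unfolding r_def by simp
      have "degree r \<le> d"
      proof (rule ccontr)
        assume "\<not> degree r \<le> d"
        hence "degree r = Suc d" using rd by simp
        hence "lead_coeff r = 0" using rc by simp
        hence "r = 0" by simp
        thus False using \<open>degree r = Suc d\<close> by simp
      qed
      hence "r \<in> J" using Suc rU by blast
      hence "r + q \<in> J" using q J by (auto simp: pideal_def)
      thus "p \<in> J" unfolding r_def by simp
    qed
  qed
  thus ?thesis by blast
qed

lemma pideal_acc:
  fixes J :: "nat \<Rightarrow> int poly set"
  assumes mono: "mono J" and id: "\<And>n. pideal (J n)"
  shows "\<exists>n0. \<forall>m\<ge>n0. J m = J n0"
proof -
  define U where "U = (\<Union>n. J n)"
  have JU: "J n \<subseteq> U" for n unfolding U_def by auto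
  have inU: "p \<in> U \<longleftrightarrow> (\<exists>n. p \<in> J n)" for p unfolding U_def by auto
  have two: "p \<in> U \<Longrightarrow> q \<in> U \<Longrightarrow> \<exists>n. p \<in> J n \<and> q \<in> J n" for p q
  proof -
    assume "p \<in> U" "q \<in> U"
    then obtain i k where "p \<in> J i" "q \<in> J k" by (auto simp: inU)
    moreover have "J i \<subseteq> J (max i k)" by (rule monoD[OF mono]) simp
    moreover have "J k \<subseteq> J (max i k)" by (rule monoD[OF mono]) simp
    ultimately show ?thesis by blast
  qed
  have U: "pideal U"
    unfolding pideal_def
  proof (intro conjI ballI allI)
    show "0 \<in> U" using id[of 0] JU[of 0] by (auto simp: pideal_def)
  next
    fix p q assume "p \<in> U" "q \<in> U"
    then obtain n where "p \<in> J n" "q \<in> J n" using two by blast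
    thus "p + q \<in> U" using id[of n] JU[of n] by (auto simp: pideal_def)
  next
    fix p c assume "p \<in> U"
    then obtain n where "p \<in> J n" by (auto simp: inU)
    thus "smult c p \<in> U" using id[of n] JU[of n] by (auto simp: pideal_def)
  next
    fix p assume "p \<in> U"
    then obtain n where "p \<in> J n" by (auto simp: inU)
    thus "pCons 0 p \<in> U" using id[of n] JU[of n] by (auto simp: pideal_def)
  qed
  define Linf where "Linf = (\<Union>d. LC d U)"
  have Linf: "iideal Linf"
    unfolding iideal_def
  proof (intro conjI ballI allI)
    show "0 \<in> Linf" unfolding Linf_def using LC_iideal[OF U, of 0] by (auto simp: iideal_def)
  next
    fix x y assume "x \<in> Linf" "y \<in> Linf"
    then obtain d d' where "x \<in> LC d U" "y \<in> LC d' U" unfolding Linf_def by auto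
    hence "x \<in> LC (max d d') U" "y \<in> LC (max d d') U"
      using LC_mono_d[OF U] by (meson max.cobounded1 max.cobounded2 subsetD)+
    thus "x + y \<in> Linf" unfolding Linf_def using LC_iideal[OF U, of "max d d'"]
      by (auto simp: iideal_def)
  next
    fix x c assume "x \<in> Linf"
    then obtain d where "x \<in> LC d U" unfolding Linf_def by auto
    hence "c * x \<in> LC d U" using LC_iideal[OF U, of d] unfolding iideal_def by blast
    thus "c * x \<in> Linf" unfolding Linf_def by blast
  qed
  obtain g where g: "g \<in> Linf" "\<forall>x\<in>Linf. g dvd x" using iideal_principal[OF Linf] by blast
  then obtain d0 where "g \<in> LC d0 U" unfolding Linf_def by auto
  then obtain p where p: "g = coeff p d0" "p \<in> U" "degree p \<le> d0" unfolding LC_def by auto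
  then obtain n0 where "p \<in> J n0" by (auto simp: inU)
  hence gn0: "g \<in> LC d0 (J n0)" using p by (auto simp: LC_def)
  have gd: "\<exists>gd\<in>LC d U. \<forall>x\<in>LC d U. gd dvd x" for d
    using iideal_principal[OF LC_iideal[OF U]] by blast
  have gdJ: "\<exists>n. \<exists>gd\<in>LC d (J n). \<forall>x\<in>LC d U. gd dvd x" for d
  proof -
    obtain gd where "gd \<in> LC d U" "\<forall>x\<in>LC d U. gd dvd x" using gd by blast
    moreover from this obtain q where "gd = coeff q d" "q \<in> U" "degree q \<le> d" unfolding LC_def by auto
    moreover from this obtain n where "q \<in> J n" by (auto simp: inU)
    ultimately show ?thesis by (auto simp: LC_def)
  qed
  have LCmn: "n \<le> m \<Longrightarrow> LC d (J n) \<subseteq> LC d (J m)" for n m d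
    using mono by (simp add: LC_mono_J monoD)
  have "\<exists>M\<ge>n0. \<forall>d<k. \<exists>gd\<in>LC d (J M). \<forall>x\<in>LC d U. gd dvd x" for k
  proof (induct k)
    case 0 then show ?case by auto
  next
    case (Suc k)
    then obtain M where M: "M \<ge> n0" "\<forall>d<k. \<exists>gd\<in>LC d (J M). \<forall>x\<in>LC d U. gd dvd x" by blast
    obtain n where n: "\<exists>gd\<in>LC k (J n). \<forall>x\<in>LC k U. gd dvd x" using gdJ by blast
    show ?case
    proof (intro exI[of _ "max M n"] conjI allI impI)
      show "n0 \<le> max M n" using M by simp
      fix d assume "d < Suc k"
      hence "d < k \<or> d = k" by auto
      thus "\<exists>gd\<in>LC d (J (max M n)). \<forall>x\<in>LC d U. gd dvd x"
      proof
        assume "d < k"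
        then obtain gd where "gd\<in>LC d (J M)" "\<forall>x\<in>LC d U. gd dvd x" using M by blast
        thus ?thesis using LCmn[of M "max M n" d] by auto
      next
        assume "d = k"
        thus ?thesis using n LCmn[of n "max M n" d] by auto
      qed
    qed
  qed
  then obtain M where M: "M \<ge> n0" "\<forall>d<d0. \<exists>gd\<in>LC d (J M). \<forall>x\<in>LC d U. gd dvd x" by blast
  have lc: "LC d U \<subseteq> LC d (J M)" for d
  proof
    fix x assume x: "x \<in> LC d U"
    show "x \<in> LC d (J M)"
    proof (cases "d < d0")
      case True
      then obtain gd where gd: "gd \<in> LC d (J M)" "gd dvd x" using M x by blast
      then obtain c where "x = c * gd" by (metis dvdE mult.commute)
      thus ?thesis using gd LC_iideal[OF id[of M], of d] unfolding iideal_def by blast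
    next
      case False
      have "x \<in> Linf" using x unfolding Linf_def by auto
      hence "g dvd x" using g by auto
      then obtain c where c: "x = c * g" by (metis dvdE mult.commute)
      have "g \<in> LC d (J M)"
        using gn0 LCmn[OF M(1), of d0] LC_mono_d[OF id[of M], of d0 d] False by auto
      thus ?thesis using c LC_iideal[OF id[of M], of d] unfolding iideal_def by blast
    qed
  qed
  have "U \<subseteq> J M" by (rule LC_equal[OF id U JU lc])
  hence "\<forall>m\<ge>M. J m = J M" using JU monoD[OF mono] by (metis subset_antisym subset_trans)
  thus ?thesis by blast
qed



context autK begin

definition submod :: "'k set \<Rightarrow> bool" where
  "submod N \<longleftrightarrow> 0 \<in> N \<and> (\<forall>x\<in>N. \<forall>y\<in>N. x + y \<in> N) \<and> (\<forall>x\<in>N. - x \<in> N)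
     \<and> (\<forall>x\<in>N. phi x \<in> N) \<and> (\<forall>x\<in>N. psi x \<in> N)"

definition noeth :: "'k set \<Rightarrow> 'k set \<Rightarrow> bool" where
  "noeth L M \<longleftrightarrow> (\<forall>N::nat \<Rightarrow> 'k set. mono N \<and> (\<forall>n. submod (N n) \<and> L \<subseteq> N n \<and> N n \<subseteq> M)
      \<longrightarrow> (\<exists>n0. \<forall>m\<ge>n0. N m = N n0))"

definition Cyc :: "'k \<Rightarrow> 'k set" where
  "Cyc a = {(psi ^^ j) (ev p a) | j p. True}"

definition sumset :: "'k set \<Rightarrow> 'k set \<Rightarrow> 'k set" where
  "sumset X Y = {x + y | x y. x \<in> X \<and> y \<in> Y}"

definition span :: "'k set \<Rightarrow> 'k set" where
  "span A = \<Inter>{N. submod N \<and> A \<subseteq> N}"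

lemma submodD:
  assumes "submod N"
  shows "0 \<in> N" "x \<in> N \<Longrightarrow> y \<in> N \<Longrightarrow> x + y \<in> N" "x \<in> N \<Longrightarrow> - x \<in> N"
    "x \<in> N \<Longrightarrow> phi x \<in> N" "x \<in> N \<Longrightarrow> psi x \<in> N"
  using assms unfolding submod_def by blast+

lemma submod_diff: "submod N \<Longrightarrow> x \<in> N \<Longrightarrow> y \<in> N \<Longrightarrow> x - y \<in> N"
  by (metis diff_conv_add_uminus submodD(2,3))

lemma submod_nsc: "submod N \<Longrightarrow> x \<in> N \<Longrightarrow> nsc k x \<in> N"
  by (induct k) (simp_all add: submodD)

lemma submod_zsc: "submod N \<Longrightarrow> x \<in> N \<Longrightarrow> zsc k x \<in> N"
  unfolding zsc_def by (simp add: submod_diff submod_nsc)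

lemma submod_phi_pow: "submod N \<Longrightarrow> x \<in> N \<Longrightarrow> (phi ^^ k) x \<in> N"
  by (induct k) (simp_all add: submodD)

lemma submod_psi_pow: "submod N \<Longrightarrow> x \<in> N \<Longrightarrow> (psi ^^ k) x \<in> N"
  by (induct k) (simp_all add: submodD)

lemma submod_ev: "submod N \<Longrightarrow> x \<in> N \<Longrightarrow> ev p x \<in> N"
proof -
  assume N: "submod N" and x: "x \<in> N"
  have "finite F \<Longrightarrow> (\<Sum>i\<in>F. zsc (coeff p i) ((phi ^^ i) x)) \<in> N" for F
    by (induct F rule: finite_induct) (simp_all add: submodD[OF N] submod_zsc[OF N] submod_phi_pow[OF N] x)
  thus ?thesis unfolding ev_def by simp
qed

lemma noeth_trans:
  assumes L': "submod L'" and M: "\<And>x y. x \<in> M \<Longrightarrow> y \<in> M \<Longrightarrow> x + y \<in> M"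
    and sub: "L \<subseteq> L'" "L' \<subseteq> M"
    and n1: "noeth L L'" and n2: "noeth L' M"
  shows "noeth L M"
  unfolding noeth_def
proof (intro allI impI)
  fix N :: "nat \<Rightarrow> 'k set"
  assume a: "mono N \<and> (\<forall>n. submod (N n) \<and> L \<subseteq> N n \<and> N n \<subseteq> M)"
  hence mono: "mono N" and N: "\<And>n. submod (N n)" "\<And>n. L \<subseteq> N n" "\<And>n. N n \<subseteq> M" by auto
  define N1 where "N1 n = N n \<inter> L'" for n
  define N2 where "N2 n = sumset (N n) L'" for n
  have "submod (N1 n)" for n
    using N(1)[of n] L' unfolding N1_def submod_def by auto
  moreover have "mono N1" using mono unfolding N1_def mono_def by auto
  moreover have "L \<subseteq> N1 n" "N1 n \<subseteq> L'" for n using N sub unfolding N1_def by auto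
  ultimately obtain a1 where a1: "\<forall>m\<ge>a1. N1 m = N1 a1"
    using n1 unfolding noeth_def by blast
  have "submod (N2 n)" for n
    unfolding submod_def N2_def sumset_def
  proof (intro conjI ballI)
    show "0 \<in> {x + y |x y. x \<in> N n \<and> y \<in> L'}"
      using submodD(1)[OF N(1)[of n]] submodD(1)[OF L'] by force
  next
    fix u v assume "u \<in> {x + y |x y. x \<in> N n \<and> y \<in> L'}" "v \<in> {x + y |x y. x \<in> N n \<and> y \<in> L'}"
    then obtain x y x' y' where "u = x + y" "x \<in> N n" "y \<in> L'" "v = x' + y'" "x' \<in> N n" "y' \<in> L'" by auto
    thus "u + v \<in> {x + y |x y. x \<in> N n \<and> y \<in> L'}"
      using submodD(2)[OF N(1)[of n]] submodD(2)[OF L']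
      by (intro CollectI exI[of _ "x + x'"] exI[of _ "y + y'"]) (simp add: algebra_simps)
  next
    fix u assume "u \<in> {x + y |x y. x \<in> N n \<and> y \<in> L'}"
    then obtain x y where u: "u = x + y" "x \<in> N n" "y \<in> L'" by auto
    show "- u \<in> {x + y |x y. x \<in> N n \<and> y \<in> L'}"
      using u submodD(3)[OF N(1)[of n]] submodD(3)[OF L']
      by (intro CollectI exI[of _ "- x"] exI[of _ "- y"]) (simp add: algebra_simps)
    show "phi u \<in> {x + y |x y. x \<in> N n \<and> y \<in> L'}"
      using u submodD(4)[OF N(1)[of n]] submodD(4)[OF L']
      by (intro CollectI exI[of _ "phi x"] exI[of _ "phi y"]) (simp add: addf_add[OF addf_phi])
    show "psi u \<in> {x + y |x y. x \<in> N n \<and> y \<in> L'}"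
      using u submodD(5)[OF N(1)[of n]] submodD(5)[OF L']
      by (intro CollectI exI[of _ "psi x"] exI[of _ "psi y"]) (simp add: addf_add[OF addf_psi])
  qed
  moreover have "mono N2" using mono unfolding N2_def mono_def sumset_def by blast
  moreover have "L' \<subseteq> N2 n" for n
  proof
    fix y assume "y \<in> L'"
    thus "y \<in> N2 n" using submodD(1)[OF N(1)[of n]] unfolding N2_def sumset_def by force
  qed
  moreover have "N2 n \<subseteq> M" for n using N(3)[of n] sub M unfolding N2_def sumset_def by blast
  ultimately obtain a2 where a2: "\<forall>m\<ge>a2. N2 m = N2 a2"
    using n2 unfolding noeth_def by blast
  show "\<exists>n0. \<forall>m\<ge>n0. N m = N n0"
  proof (intro exI[of _ "max a1 a2"] allI impI)
    fix m assume m: "max a1 a2 \<le> m"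
    let ?n = "max a1 a2"
    show "N m = N ?n"
    proof
      show "N ?n \<subseteq> N m" using monoD[OF mono m] .
      show "N m \<subseteq> N ?n"
      proof
        fix x assume x: "x \<in> N m"
        have "N2 m = N2 ?n" using a2 m by (metis max.cobounded2 order.trans)
        moreover have "x \<in> N2 m" using x submodD(1)[OF L'] unfolding N2_def sumset_def by force
        ultimately obtain y l where yl: "x = y + l" "y \<in> N ?n" "l \<in> L'"
          unfolding N2_def sumset_def by auto
        have "y \<in> N m" using yl monoD[OF mono m] by auto
        hence "x - y \<in> N m" using x submod_diff[OF N(1)] by blast
        hence "l \<in> N1 m" using yl unfolding N1_def by simp
        moreover have "N1 m = N1 ?n" using a1 m by (metis max.cobounded1 order.trans)
        ultimately have "l \<in> N ?n" unfolding N1_def by auto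
        thus "x \<in> N ?n" using yl submodD(2)[OF N(1)] by blast
      qed
    qed
  qed
qed

lemma ev_shift: "(phi ^^ k) (ev p a) = ev (monom 1 k * p) a"
  by (simp add: ev_mult ev_monom)

lemma Cyc_submod: "submod (Cyc a)"
  unfolding submod_def Cyc_def
proof (intro conjI ballI)
  show "0 \<in> {(psi ^^ j) (ev p a) |j p. True}"
    by (intro CollectI exI[of _ 0] exI[of _ "0::int poly"]) simp
next
  fix u v assume "u \<in> {(psi ^^ j) (ev p a) |j p. True}" "v \<in> {(psi ^^ j) (ev p a) |j p. True}"
  then obtain j p k q where uv: "u = (psi ^^ j) (ev p a)" "v = (psi ^^ k) (ev q a)" by auto
  have "(psi ^^ (j + k)) (ev (monom 1 k * p + monom 1 j * q) a)
      = (psi ^^ (j + k)) ((phi ^^ k) (ev p a)) + (psi ^^ (j + k)) ((phi ^^ j) (ev q a))"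
    by (simp add: ev_add ev_shift addf_add[OF addf_funpow[OF addf_psi]])
  also have "(psi ^^ (j + k)) ((phi ^^ k) (ev p a)) = u"
    unfolding uv by (simp add: funpow_add)
  also have "(psi ^^ (j + k)) ((phi ^^ j) (ev q a)) = v"
    unfolding uv by (simp add: funpow_add add.commute[of j k])
  finally have "u + v = (psi ^^ (j + k)) (ev (monom 1 k * p + monom 1 j * q) a)" by simp
  thus "u + v \<in> {(psi ^^ j) (ev p a) |j p. True}" by blast
next
  fix u assume "u \<in> {(psi ^^ j) (ev p a) |j p. True}"
  then obtain j p where u: "u = (psi ^^ j) (ev p a)" by auto
  have "- u = (psi ^^ j) (ev (- p) a)"
    unfolding u by (simp add: ev_minus addf_minus[OF addf_funpow[OF addf_psi]])
  thus "- u \<in> {(psi ^^ j) (ev p a) |j p. True}" by blast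
  have "psi u = (psi ^^ Suc j) (ev p a)" unfolding u by simp
  thus "psi u \<in> {(psi ^^ j) (ev p a) |j p. True}" by blast
  show "phi u \<in> {(psi ^^ j) (ev p a) |j p. True}"
  proof (cases j)
    case 0
    have "phi u = (psi ^^ 0) (ev (monom 1 1 * p) a)"
      unfolding u 0 using ev_shift[of 1 p a] by simp
    thus ?thesis by blast
  next
    case (Suc i)
    have "phi u = (psi ^^ i) (ev p a)" unfolding u Suc by simp
    thus ?thesis by blast
  qed
qed

lemma sumset_submod:
  assumes X: "submod X" and Y: "submod Y"
  shows "submod (sumset X Y)"
proof -
  have mem: "x \<in> X \<Longrightarrow> y \<in> Y \<Longrightarrow> x + y \<in> sumset X Y" for x y
    unfolding sumset_def by blast
  have el: "u \<in> sumset X Y \<Longrightarrow> \<exists>x y. u = x + y \<and> x \<in> X \<and> y \<in> Y" for u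
    unfolding sumset_def by blast
  show ?thesis unfolding submod_def
  proof (intro conjI ballI)
    show "0 \<in> sumset X Y" using mem[OF submodD(1)[OF X] submodD(1)[OF Y]] by simp
  next
    fix u v assume "u \<in> sumset X Y" "v \<in> sumset X Y"
    then obtain x y x' y' where "u = x + y" "x \<in> X" "y \<in> Y" "v = x' + y'" "x' \<in> X" "y' \<in> Y"
      using el by metis
    moreover have "u + v = (x + x') + (y + y')" using calculation by (simp add: algebra_simps)
    ultimately show "u + v \<in> sumset X Y" using mem submodD(2)[OF X] submodD(2)[OF Y] by metis
  next
    fix u assume "u \<in> sumset X Y"
    then obtain x y where u: "u = x + y" "x \<in> X" "y \<in> Y" using el by metis
    have "- u = - x + - y" using u by simp
    thus "- u \<in> sumset X Y" using mem u submodD(3)[OF X] submodD(3)[OF Y] by metis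
    have "phi u = phi x + phi y" using u addf_add[OF addf_phi] by simp
    thus "phi u \<in> sumset X Y" using mem u submodD(4)[OF X] submodD(4)[OF Y] by metis
    have "psi u = psi x + psi y" using u addf_add[OF addf_psi] by simp
    thus "psi u \<in> sumset X Y" using mem u submodD(5)[OF X] submodD(5)[OF Y] by metis
  qed
qed

lemma noeth_cyc:
  assumes L: "submod L" and M: "M \<subseteq> sumset L (Cyc a)"
  shows "noeth L M"
  unfolding noeth_def
proof (intro allI impI)
  fix N :: "nat \<Rightarrow> 'k set"
  assume asm: "mono N \<and> (\<forall>n. submod (N n) \<and> L \<subseteq> N n \<and> N n \<subseteq> M)"
  hence mono: "mono N" and N: "\<And>n. submod (N n)" "\<And>n. L \<subseteq> N n" "\<And>n. N n \<subseteq> M" by auto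
  define I where "I n = {p. ev p a \<in> N n}" for n
  have "pideal (I n)" for n
    unfolding pideal_def I_def
    using N(1)[of n]
    by (simp add: submodD ev_add ev_smult submod_zsc ev_pCons)
  moreover have "mono I" using mono unfolding I_def mono_def by auto
  ultimately obtain n0 where n0: "\<forall>m\<ge>n0. I m = I n0" using pideal_acc by blast
  show "\<exists>n0. \<forall>m\<ge>n0. N m = N n0"
  proof (intro exI[of _ n0] allI impI)
    fix m assume m: "n0 \<le> m"
    show "N m = N n0"
    proof
      show "N n0 \<subseteq> N m" using monoD[OF mono m] .
      show "N m \<subseteq> N n0"
      proof
        fix x assume x: "x \<in> N m"
        then obtain l j p where xl: "x = l + (psi ^^ j) (ev p a)" "l \<in> L"
          using N(3)[of m] M unfolding sumset_def Cyc_def by blast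
        have "(phi ^^ j) x - (phi ^^ j) l = ev p a"
          unfolding xl by (simp add: addf_add[OF addf_funpow[OF addf_phi]])
        moreover have "(phi ^^ j) x \<in> N m" "(phi ^^ j) l \<in> N m"
          using x xl N(1,2)[of m] by (auto simp: submod_phi_pow)
        ultimately have "ev p a \<in> N m" using submod_diff[OF N(1)[of m]] by metis
        hence "p \<in> I n0" using n0 m unfolding I_def by blast
        hence "(psi ^^ j) (ev p a) \<in> N n0" unfolding I_def by (simp add: submod_psi_pow N(1))
        thus "x \<in> N n0" using xl N(1,2)[of n0] submodD(2) by blast
      qed
    qed
  qed
qed

lemma span_submod: "submod (span A)"
  unfolding span_def submod_def by blast

lemma span_sub: "A \<subseteq> span A"
  unfolding span_def by blast

lemma span_least: "submod N \<Longrightarrow> A \<subseteq> N \<Longrightarrow> span A \<subseteq> N"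
  unfolding span_def by blast

lemma span_mono: "A \<subseteq> B \<Longrightarrow> span A \<subseteq> span B"
  unfolding span_def by blast

lemma span_insert: "span (insert a A) \<subseteq> sumset (span A) (Cyc a)"
proof (rule span_least)
  show "submod (sumset (span A) (Cyc a))" by (intro sumset_submod span_submod Cyc_submod)
  have "a \<in> sumset (span A) (Cyc a)"
    unfolding sumset_def Cyc_def using submodD(1)[OF span_submod[of A]]
    by (intro CollectI exI[of _ 0] exI[of _ a]) (auto intro!: exI[of _ 0] exI[of _ "1::int poly"])
  moreover have "b \<in> sumset (span A) (Cyc a)" if "b \<in> A" for b
    unfolding sumset_def Cyc_def using that span_sub[of A]
    by (intro CollectI exI[of _ b] exI[of _ 0]) (auto intro!: exI[of _ 0] exI[of _ "0::int poly"])
  ultimately show "insert a A \<subseteq> sumset (span A) (Cyc a)" by blast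
qed

lemma zero_submod: "submod {0}"
  unfolding submod_def using addf_0[OF addf_phi] addf_0[OF addf_psi] by simp

lemma noeth_span: "finite A \<Longrightarrow> noeth {0} (span A)"
proof (induct A rule: finite_induct)
  case empty
  have "span {} \<subseteq> {0}" by (rule span_least[OF zero_submod]) simp
  show ?case unfolding noeth_def
  proof (intro allI impI)
    fix N :: "nat \<Rightarrow> 'k set"
    assume "mono N \<and> (\<forall>n. submod (N n) \<and> {0} \<subseteq> N n \<and> N n \<subseteq> span {})"
    hence "N n = {0}" for n using \<open>span {} \<subseteq> {0}\<close> by blast
    thus "\<exists>n0. \<forall>m\<ge>n0. N m = N n0" by auto
  qed
next
  case (insert a A)
  show ?case
  proof (rule noeth_trans[OF span_submod])
    show "\<And>x y. x \<in> span (insert a A) \<Longrightarrow> y \<in> span (insert a A) \<Longrightarrow> x + y \<in> span (insert a A)"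
      using submodD(2)[OF span_submod] by blast
    show "{0} \<subseteq> span A" using submodD(1)[OF span_submod] by blast
    show "span A \<subseteq> span (insert a A)" by (rule span_mono) blast
    show "noeth {0} (span A)" by (rule insert)
    show "noeth (span A) (span (insert a A))" by (rule noeth_cyc[OF span_submod span_insert])
  qed
qed

lemma acc_submod:
  fixes N :: "nat \<Rightarrow> 'k set"
  assumes "finite A" "span A = UNIV" "mono N" "\<And>n. submod (N n)"
  shows "\<exists>n0. \<forall>m\<ge>n0. N m = N n0"
  using noeth_span[OF assms(1)] assms(2-4) submodD(1)[OF assms(4)] unfolding noeth_def by blast

end



context autK begin

lemma ev_sum: "ev (sum f A) x = (\<Sum>a\<in>A. ev (f a) x)"
  by (induct A rule: infinite_finite_induct) (simp_all add: ev_add)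

lemma ev_of_nat_mult: "ev (of_nat n * p) x = zsc (int n) (ev p x)"
proof -
  have "(of_nat n :: int poly) * p = smult (of_nat n) p" by (simp add: of_nat_poly)
  thus ?thesis by (simp add: ev_smult)
qed

lemma ev_power: "ev (p ^ q) x = (ev p ^^ q) x"
  by (induct q arbitrary: x) (simp_all add: ev_mult)

lemma ev_power_monom: "ev (monom 1 N ^ q) x = (phi ^^ (N * q)) x"
proof -
  have "ev (monom 1 N ^ q) x = (ev (monom 1 N) ^^ q) x" by (rule ev_power)
  also have "ev (monom 1 N) = phi ^^ N" by (rule ext) (simp add: ev_monom)
  finally show ?thesis by (simp add: funpow_mult)
qed

lemma phi_pow_submod: "submod N \<Longrightarrow> x \<in> N \<Longrightarrow> phi_pow phi m x \<in> N"
  unfolding phi_pow_def by (simp add: submod_phi_pow submod_psi_pow)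

lemma wb_span: "x \<in> word_ball phi S r \<Longrightarrow> fst x \<in> span (fst ` S)"
proof (induct r arbitrary: x)
  case 0
  then show ?case using submodD(1)[OF span_submod] by (simp add: sdp_one_def)
next
  case (Suc r)
  show ?case
  proof (cases "x \<in> word_ball phi S r")
    case True then show ?thesis using Suc by blast
  next
    case False
    then obtain y s where ys: "x = sdp_mult phi y s" "y \<in> word_ball phi S r" "s \<in> S" using Suc by auto
    have "fst s \<in> span (fst ` S)" using ys span_sub by blast
    hence "phi_pow phi (snd y) (fst s) \<in> span (fst ` S)" by (rule phi_pow_submod[OF span_submod])
    thus ?thesis using ys Suc(1)[of y] submodD(2)[OF span_submod] by (simp add: sdp_mult_def)
  qed
qed

lemma span_UNIV: "generates phi S \<Longrightarrow> span (fst ` S) = UNIV"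
proof -
  assume g: "generates phi S"
  have "a \<in> span (fst ` S)" for a
  proof -
    obtain r where "(a, 0) \<in> word_ball phi S r" using g unfolding generates_def by blast
    from wb_span[OF this] show ?thesis by simp
  qed
  thus ?thesis by blast
qed

lemma wb_rep:
  assumes fin: "finite S"
  defines "C \<equiv> (\<Sum>s\<in>S. \<bar>snd s\<bar>)"
  shows "x \<in> word_ball phi S r \<Longrightarrow> \<exists>L. length L \<le> r \<and> (\<forall>(m, b)\<in>set L. b \<in> fst ` S \<and> \<bar>m\<bar> \<le> C * int r)
      \<and> fst x = sum_list (map (\<lambda>(m, b). phi_pow phi m b) L) \<and> \<bar>snd x\<bar> \<le> C * int r"
proof (induct r arbitrary: x)
  case 0
  then show ?case by (intro exI[of _ "[]"]) (simp add: sdp_one_def)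
next
  case (Suc r)
  have C0: "C \<ge> 0" unfolding C_def by (simp add: sum_nonneg)
  have Cs: "\<bar>snd s\<bar> \<le> C" if "s \<in> S" for s
    unfolding C_def using fin that by (intro member_le_sum) auto
  show ?case
  proof (cases "x \<in> word_ball phi S r")
    case True
    then obtain L where L: "length L \<le> r" "\<forall>(m, b)\<in>set L. b \<in> fst ` S \<and> \<bar>m\<bar> \<le> C * int r"
      "fst x = sum_list (map (\<lambda>(m, b). phi_pow phi m b) L)" "\<bar>snd x\<bar> \<le> C * int r"
      using Suc(1) by blast
    have "C * int r \<le> C * int (Suc r)" using C0 by (intro mult_left_mono) auto
    thus ?thesis using L by (intro exI[of _ L]) fastforce
  next
    case False
    then obtain y s where ys: "x = sdp_mult phi y s" "y \<in> word_ball phi S r" "s \<in> S" using Suc by auto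
    then obtain L where L: "length L \<le> r" "\<forall>(m, b)\<in>set L. b \<in> fst ` S \<and> \<bar>m\<bar> \<le> C * int r"
      "fst y = sum_list (map (\<lambda>(m, b). phi_pow phi m b) L)" "\<bar>snd y\<bar> \<le> C * int r"
      using Suc(1) by blast
    have le: "C * int r \<le> C * int (Suc r)" using C0 by (intro mult_left_mono) auto
    have "\<bar>snd x\<bar> \<le> C * int (Suc r)"
      using ys L(4) Cs[OF ys(3)] by (simp add: sdp_mult_def algebra_simps)
    moreover have "fst x = sum_list (map (\<lambda>(m, b). phi_pow phi m b) (L @ [(snd y, fst s)]))"
      using ys L(3) by (simp add: sdp_mult_def)
    moreover have "\<forall>(m, b)\<in>set (L @ [(snd y, fst s)]). b \<in> fst ` S \<and> \<bar>m\<bar> \<le> C * int (Suc r)"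
      using L(2) L(4) le ys(3) by fastforce
    ultimately show ?thesis using L(1) by (intro exI[of _ "L @ [(snd y, fst s)]"]) simp
  qed
qed

lemma phi_phi_pow:
  assumes "int k + m \<ge> 0"
  shows "(phi ^^ k) (phi_pow phi m b) = (phi ^^ nat (int k + m)) b"
proof (cases "m \<ge> 0")
  case True
  then show ?thesis unfolding phi_pow_def
    by (simp add: funpow_add nat_add_distrib)
next
  case False
  define j where "j = nat (- m)"
  have jk: "j \<le> k" using assms False unfolding j_def by linarith
  have e: "(phi ^^ k) y = (phi ^^ (k - j)) ((phi ^^ j) y)" for y
    using jk by (metis funpow_add le_add_diff_inverse2 o_apply)
  have "(phi ^^ k) (phi_pow phi m b) = (phi ^^ (k - j)) ((phi ^^ j) ((psi ^^ j) b))"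
    unfolding phi_pow_def j_def[symmetric] using False by (simp only: e if_False)
  also have "\<dots> = (phi ^^ (k - j)) b" by simp
  also have "k - j = nat (int k + m)" using jk False unfolding j_def by linarith
  finally show ?thesis .
qed

lemma funpow_fix: "f x = x \<Longrightarrow> (f ^^ n) x = x"
  by (induct n) simp_all

end



locale countK = autK phi for phi :: "'k::ab_group_add \<Rightarrow> 'k" +
  fixes N c :: nat
  assumes N1: "N \<ge> 1"
    and disj: "\<And>y. (phi ^^ N) (ev ((monom 1 N - 1) ^ c) y) = ev ((monom 1 N - 1) ^ c) y
                  \<Longrightarrow> ev ((monom 1 N - 1) ^ c) y = 0"
begin

abbreviation "dp \<equiv> (monom 1 N - 1 :: int poly)"

definition cg :: "'k \<Rightarrow> 'k \<Rightarrow> bool" where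
  "cg x y \<longleftrightarrow> (\<exists>z. x - y = ev (dp ^ c) z)"

lemma cg_refl: "cg x x"
  unfolding cg_def by (intro exI[of _ 0]) (simp add: addf_0[OF addf_ev])

lemma cg_add: "cg x y \<Longrightarrow> cg x' y' \<Longrightarrow> cg (x + x') (y + y')"
  unfolding cg_def
proof -
  assume "\<exists>z. x - y = ev (dp ^ c) z" "\<exists>z. x' - y' = ev (dp ^ c) z"
  then obtain z z' where "x - y = ev (dp ^ c) z" "x' - y' = ev (dp ^ c) z'" by blast
  hence "x + x' - (y + y') = ev (dp ^ c) (z + z')" by (simp add: addf_add[OF addf_ev] algebra_simps)
  thus "\<exists>z. x + x' - (y + y') = ev (dp ^ c) z" by blast
qed

lemma cg_eq: "x = x' \<Longrightarrow> cg x' y \<Longrightarrow> cg x y" by simp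

lemma binom_cg:
  "cg (ev (monom 1 N ^ q) e) (\<Sum>i<c. zsc (int (q choose i)) (ev (dp ^ i) e))"
proof -
  define f where "f k = zsc (int (q choose k)) (ev (dp ^ k) e)" for k
  have "monom 1 N = dp + 1" by simp
  hence "ev (monom 1 N ^ q) e = ev ((dp + 1) ^ q) e" by simp
  also have "\<dots> = ev (\<Sum>k\<le>q. of_nat (q choose k) * dp ^ k * 1 ^ (q - k)) e"
    by (simp only: binomial_ring)
  also have "\<dots> = (\<Sum>k\<le>q. f k)"
    by (simp add: ev_sum ev_of_nat_mult f_def mult.assoc)
  also have "\<dots> = (\<Sum>k\<in>{..<c} \<union> {c..q+c}. f k)"
  proof (intro sum.mono_neutral_left)
    show "\<forall>i\<in>({..<c} \<union> {c..q + c}) - {..q}. f i = 0"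
      by (auto simp: f_def binomial_eq_0)
  qed auto
  also have "\<dots> = (\<Sum>k<c. f k) + (\<Sum>k\<in>{c..q+c}. f k)"
    by (intro sum.union_disjoint) auto
  also have "(\<Sum>k\<in>{c..q+c}. f k) = ev (dp ^ c) (\<Sum>k\<in>{c..q+c}. zsc (int (q choose k)) (ev (dp ^ (k - c)) e))"
  proof -
    have "f k = ev (dp ^ c) (zsc (int (q choose k)) (ev (dp ^ (k - c)) e))" if "k \<in> {c..q+c}" for k
    proof -
      have "dp ^ k = dp ^ c * dp ^ (k - c)" using that by (simp add: power_add[symmetric])
      thus ?thesis unfolding f_def by (simp add: ev_mult addf_zsc[OF addf_ev])
    qed
    thus ?thesis by (simp add: addf_sum[OF addf_ev])
  qed
  finally show ?thesis unfolding cg_def f_def by (intro exI) (simp add: algebra_simps)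
qed

definition Tm :: "'k set \<Rightarrow> ('k \<times> nat \<Rightarrow> int) \<Rightarrow> 'k" where
  "Tm E n = (\<Sum>x\<in>E \<times> {..<c}. zsc (n x) (ev (dp ^ snd x) (fst x)))"

lemma choose_bound: "q \<le> Qm \<Longrightarrow> i < c \<Longrightarrow> q choose i \<le> (Qm + 1) ^ c"
proof -
  assume q: "q \<le> Qm" and i: "i < c"
  have "q choose i \<le> q ^ i"
    by (cases "i \<le> q") (simp_all add: binomial_le_pow binomial_eq_0)
  also have "\<dots> \<le> (Qm + 1) ^ i" using q by (intro power_mono) auto
  also have "\<dots> \<le> (Qm + 1) ^ c" using i by (intro power_increasing) auto
  finally show ?thesis .
qed

lemma acc:
  assumes fin: "finite E"
  shows "(\<forall>(q, e)\<in>set Lq. q \<le> Qm \<and> e \<in> E) \<Longrightarrow>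
    \<exists>n. (\<forall>x\<in>E \<times> {..<c}. 0 \<le> n x \<and> n x \<le> int (length Lq) * int ((Qm + 1) ^ c))
      \<and> cg (sum_list (map (\<lambda>(q, e). ev (monom 1 N ^ q) e) Lq)) (Tm E n)"
proof (induct Lq)
  case Nil
  show ?case by (intro exI[of _ "\<lambda>_. 0"]) (simp add: Tm_def cg_refl)
next
  case (Cons qe Lq)
  obtain q e where qe: "qe = (q, e)" by fastforce
  have q: "q \<le> Qm" and e: "e \<in> E" using Cons(2) qe by auto
  obtain n where n: "\<forall>x\<in>E \<times> {..<c}. 0 \<le> n x \<and> n x \<le> int (length Lq) * int ((Qm + 1) ^ c)"
    "cg (sum_list (map (\<lambda>(q, e). ev (monom 1 N ^ q) e) Lq)) (Tm E n)"
    using Cons by auto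
  define d where "d x = (if fst x = e then int (q choose snd x) else 0)" for x :: "'k \<times> nat"
  define X where "X = (\<Sum>i<c. zsc (int (q choose i)) (ev (dp ^ i) e))"
  have TX: "Tm E d = X"
  proof -
    have "Tm E d = (\<Sum>e'\<in>E. \<Sum>i<c. zsc (d (e', i)) (ev (dp ^ i) e'))"
      unfolding Tm_def by (simp add: sum.cartesian_product')
    also have "\<dots> = (\<Sum>e'\<in>E. if e' = e then X else 0)"
      by (intro sum.cong refl) (simp add: d_def X_def)
    also have "\<dots> = X" using fin e by simp
    finally show ?thesis .
  qed
  have Tadd: "Tm E (\<lambda>x. d x + n x) = Tm E d + Tm E n"
    unfolding Tm_def by (simp add: zsc_add sum.distrib)
  show ?case
  proof (intro exI[of _ "\<lambda>x. d x + n x"] conjI)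
    show "\<forall>x\<in>E \<times> {..<c}. 0 \<le> d x + n x \<and> d x + n x \<le> int (length (qe # Lq)) * int ((Qm + 1) ^ c)"
    proof (rule ballI)
    fix x assume x: "x \<in> E \<times> {..<c}"
    have b0: "q choose snd x \<le> (Qm + 1) ^ c" using choose_bound[OF q] x by auto
    have b: "int (q choose snd x) \<le> int ((Qm + 1) ^ c)" using b0 by (simp only: of_nat_le_iff)
    have "0 \<le> d x" unfolding d_def by simp
    moreover have "d x \<le> int ((Qm + 1) ^ c)"
    proof (cases "fst x = e")
      case True
      hence "d x = int (q choose snd x)" by (simp add: d_def)
      thus ?thesis using b by linarith
    next
      case False
      hence "d x = 0" by (simp add: d_def)
      thus ?thesis by linarith
    qed
    ultimately have "0 \<le> d x" "d x \<le> int ((Qm + 1) ^ c)" by auto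
    show "0 \<le> d x + n x \<and> d x + n x \<le> int (length (qe # Lq)) * int ((Qm + 1) ^ c)"
    proof -
      have "0 \<le> n x" "n x \<le> int (length Lq) * int ((Qm + 1) ^ c)" using n(1) x by auto
      moreover have "int (length (qe # Lq)) * int ((Qm + 1) ^ c) = int ((Qm + 1) ^ c) + int (length Lq) * int ((Qm + 1) ^ c)"
        by (simp add: algebra_simps)
      ultimately show ?thesis using \<open>0 \<le> d x\<close> \<open>d x \<le> int ((Qm + 1) ^ c)\<close> by linarith
    qed
    qed
  next
    have "cg (ev (monom 1 N ^ q) e + sum_list (map (\<lambda>(q, e). ev (monom 1 N ^ q) e) Lq)) (X + Tm E n)"
      unfolding X_def by (intro cg_add binom_cg n(2))
    thus "cg (sum_list (map (\<lambda>(q, e). ev (monom 1 N ^ q) e) (qe # Lq))) (Tm E (\<lambda>x. d x + n x))"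
      by (simp add: qe Tadd TX)
  qed
qed

lemma rep:
  assumes fx: "(phi ^^ N) a = a"
    and L: "\<forall>(m, b)\<in>set L. b \<in> B \<and> \<bar>m\<bar> \<le> int Q"
    and a: "a = sum_list (map (\<lambda>(m, b). phi_pow phi m b) L)"
  defines "Lq \<equiv> map (\<lambda>(m, b). (nat (int (Q * N) + m) div N, (phi ^^ (nat (int (Q * N) + m) mod N)) b)) L"
  shows "a = sum_list (map (\<lambda>(q, e). ev (monom 1 N ^ q) e) Lq)"
    and "\<forall>(q, e)\<in>set Lq. q \<le> 2 * Q \<and> e \<in> (\<lambda>(s, b). (phi ^^ s) b) ` ({..<N} \<times> B)"
proof -
  have QN: "Q \<le> Q * N" using N1 by simp
  have "(phi ^^ (N * Q)) a = a" using fx by (simp add: funpow_mult[symmetric] funpow_fix)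
  hence "a = (phi ^^ (Q * N)) a" by (simp add: mult.commute)
  also have "\<dots> = sum_list (map ((phi ^^ (Q * N)) \<circ> (\<lambda>(m, b). phi_pow phi m b)) L)"
    using a by (simp add: addf_sum_list[OF addf_funpow[OF addf_phi]])
  also have "map ((phi ^^ (Q * N)) \<circ> (\<lambda>(m, b). phi_pow phi m b)) L
      = map ((\<lambda>(q, e). ev (monom 1 N ^ q) e) \<circ> (\<lambda>(m, b). (nat (int (Q * N) + m) div N, (phi ^^ (nat (int (Q * N) + m) mod N)) b))) L"
  proof (rule map_cong[OF refl])
    fix mb assume mb: "mb \<in> set L"
    obtain m b where mbe: "mb = (m, b)" by fastforce
    have m: "\<bar>m\<bar> \<le> int Q" using L mb mbe by auto
    define t where "t = nat (int (Q * N) + m)"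
    have nn: "int (Q * N) + m \<ge> 0" using m QN by linarith
    have "(phi ^^ (Q * N)) (phi_pow phi m b) = (phi ^^ t) b"
      unfolding t_def by (rule phi_phi_pow[OF nn])
    also have "\<dots> = (phi ^^ (N * (t div N) + t mod N)) b" by simp
    also have "\<dots> = (phi ^^ (N * (t div N))) ((phi ^^ (t mod N)) b)"
      by (simp only: funpow_add o_apply)
    also have "\<dots> = ev (monom 1 N ^ (t div N)) ((phi ^^ (t mod N)) b)"
      by (simp only: ev_power_monom)
    finally show "((phi ^^ (Q * N)) \<circ> (\<lambda>(m, b). phi_pow phi m b)) mb
      = ((\<lambda>(q, e). ev (monom 1 N ^ q) e) \<circ> (\<lambda>(m, b). (nat (int (Q * N) + m) div N, (phi ^^ (nat (int (Q * N) + m) mod N)) b))) mb"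
      unfolding mbe t_def by simp
  qed
  finally show "a = sum_list (map (\<lambda>(q, e). ev (monom 1 N ^ q) e) Lq)"
    unfolding Lq_def by simp
  show "\<forall>(q, e)\<in>set Lq. q \<le> 2 * Q \<and> e \<in> (\<lambda>(s, b). (phi ^^ s) b) ` ({..<N} \<times> B)"
  proof
    fix qe assume "qe \<in> set Lq"
    then obtain m b where mb: "(m, b) \<in> set L"
      "qe = (nat (int (Q * N) + m) div N, (phi ^^ (nat (int (Q * N) + m) mod N)) b)"
      unfolding Lq_def by auto
    have m: "\<bar>m\<bar> \<le> int Q" "b \<in> B" using L mb by auto
    define t where "t = nat (int (Q * N) + m)"
    have h: "int Q \<le> int (Q * N)" using QN by (simp only: of_nat_le_iff)
    have "int (Q * N) + m \<le> int (2 * (Q * N))" using m(1) h by (simp add: mult.commute)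
    hence "t \<le> 2 * (Q * N)" unfolding t_def by (simp only: nat_le_iff)
    hence "t \<le> 2 * Q * N" by (simp add: mult.assoc)
    hence "t div N \<le> (2 * Q * N) div N" by (rule div_le_mono)
    hence "t div N \<le> 2 * Q" using N1 by simp
    moreover have "t mod N < N" using N1 by simp
    ultimately show "case qe of (q, e) \<Rightarrow> q \<le> 2 * Q \<and> e \<in> (\<lambda>(s, b). (phi ^^ s) b) ` ({..<N} \<times> B)"
      using mb(2) m(2) unfolding t_def by force
  qed
qed

lemma count:
  fixes X :: "('k \<times> int) set"
  assumes finB: "finite B"
    and X: "\<And>x. x \<in> X \<Longrightarrow> snd x = 0 \<and> (phi ^^ N) (fst x) = fst x \<and>
        (\<exists>L. length L \<le> r \<and> (\<forall>(m, b)\<in>set L. b \<in> B \<and> \<bar>m\<bar> \<le> int Q)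
           \<and> fst x = sum_list (map (\<lambda>(m, b). phi_pow phi m b) L))"
  shows "card X \<le> (r * (2 * Q + 1) ^ c + 1) ^ (card ((\<lambda>(s, b). (phi ^^ s) b) ` ({..<N} \<times> B)) * c)"
proof -
  define E where "E = (\<lambda>(s, b). (phi ^^ s) b) ` ({..<N} \<times> B)"
  have finE: "finite E" unfolding E_def using finB by simp
  define Dom where "Dom = E \<times> {..<c}"
  define Bd where "Bd = int r * int ((2 * Q + 1) ^ c)"
  define F where "F = PiE Dom (\<lambda>_. {0..Bd})"
  have finF: "finite F" unfolding F_def Dom_def using finE by (simp add: finite_PiE)
  have ex: "\<exists>n. n \<in> F \<and> cg (fst x) (Tm E n)" if x: "x \<in> X" for x
  proof -
    obtain L where L: "length L \<le> r" "\<forall>(m, b)\<in>set L. b \<in> B \<and> \<bar>m\<bar> \<le> int Q"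
      "fst x = sum_list (map (\<lambda>(m, b). phi_pow phi m b) L)" using X[OF x] by blast
    define Lq where "Lq = map (\<lambda>(m, b). (nat (int (Q * N) + m) div N, (phi ^^ (nat (int (Q * N) + m) mod N)) b)) L"
    have fx: "(phi ^^ N) (fst x) = fst x" using X[OF x] by blast
    have r1: "fst x = sum_list (map (\<lambda>(q, e). ev (monom 1 N ^ q) e) Lq)"
      unfolding Lq_def by (rule rep(1)[OF fx L(2) L(3)])
    have r2: "\<forall>(q, e)\<in>set Lq. q \<le> 2 * Q \<and> e \<in> E"
      unfolding Lq_def E_def by (rule rep(2)[OF fx L(2) L(3)])
    obtain n where n: "\<forall>x\<in>E \<times> {..<c}. 0 \<le> n x \<and> n x \<le> int (length Lq) * int ((2 * Q + 1) ^ c)"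
      "cg (sum_list (map (\<lambda>(q, e). ev (monom 1 N ^ q) e) Lq)) (Tm E n)"
      using acc[OF finE r2] by blast
    have "length Lq \<le> r" using L(1) unfolding Lq_def by simp
    hence "int (length Lq) * int ((2 * Q + 1) ^ c) \<le> Bd" unfolding Bd_def
      by (intro mult_right_mono) auto
    hence nb: "0 \<le> n y \<and> n y \<le> Bd" if "y \<in> Dom" for y
      using n(1) that unfolding Dom_def by (meson order.trans)
    have "restrict n Dom \<in> F" unfolding F_def restrict_PiE_iff using nb by simp
    moreover have "Tm E (restrict n Dom) = Tm E n" unfolding Tm_def Dom_def
      by (intro sum.cong refl) simp
    moreover have "cg (fst x) (Tm E n)" using n(2) r1 by simp
    ultimately show ?thesis by metis
  qed
  define g where "g x = (SOME n. n \<in> F \<and> cg (fst x) (Tm E n))" for x :: "'k \<times> int"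
  have g: "g x \<in> F \<and> cg (fst x) (Tm E (g x))" if "x \<in> X" for x
    unfolding g_def using someI_ex[OF ex[OF that]] .
  have "inj_on g X"
  proof (rule inj_onI)
    fix x y assume xy: "x \<in> X" "y \<in> X" "g x = g y"
    obtain z where z: "fst x - Tm E (g x) = ev (dp ^ c) z" using g[OF xy(1)] unfolding cg_def by blast
    obtain z' where z': "fst y - Tm E (g x) = ev (dp ^ c) z'" using g[OF xy(2)] xy(3) unfolding cg_def by auto
    have d: "fst x - fst y = ev (dp ^ c) (z - z')"
      using z z' by (simp add: addf_diff[OF addf_ev] algebra_simps)
    have "(phi ^^ N) (fst x - fst y) = fst x - fst y"
      using X[OF xy(1)] X[OF xy(2)] by (simp add: addf_diff[OF addf_funpow[OF addf_phi]])
    hence "fst x - fst y = 0" using disj[of "z - z'"] d by simp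
    thus "x = y" using X[OF xy(1)] X[OF xy(2)] by (simp add: prod_eq_iff)
  qed
  moreover have "g ` X \<subseteq> F" using g by auto
  ultimately have "card X \<le> card F" using finF by (rule card_inj_on_le)
  also have "card F = (nat (Bd + 1)) ^ (card E * c)"
    unfolding F_def Dom_def using finE by (simp add: card_PiE card_cartesian_product)
  also have "nat (Bd + 1) = r * (2 * Q + 1) ^ c + 1"
  proof -
    have "int r * int ((2 * Q + 1) ^ c) + 1 = int (r * (2 * Q + 1) ^ c + 1)"
      by (simp only: of_nat_mult of_nat_add of_nat_1)
    thus ?thesis unfolding Bd_def by (simp only: nat_int)
  qed
  finally show ?thesis unfolding E_def .
qed

end



lemma bound_nat:
  fixes Q Cn r c m :: nat
  assumes "Q \<le> Cn * r"
  shows "(r * (2 * Q + 1) ^ c + 1) ^ m \<le> ((2 * Cn + 1) ^ c + 1) ^ m * (r + 1) ^ ((c + 1) * m)"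
proof -
  have "2 * Q + 1 \<le> (2 * Cn + 1) * (r + 1)" using assms by (simp add: algebra_simps)
  hence "(2 * Q + 1) ^ c \<le> ((2 * Cn + 1) * (r + 1)) ^ c" by (rule power_mono) simp
  hence a: "(2 * Q + 1) ^ c \<le> (2 * Cn + 1) ^ c * (r + 1) ^ c" by (simp only: power_mult_distrib)
  have "r * (2 * Q + 1) ^ c \<le> (r + 1) * ((2 * Cn + 1) ^ c * (r + 1) ^ c)"
    using a by (intro mult_mono) auto
  moreover have "1 \<le> (r + 1) * (r + 1) ^ c" by (simp add: Suc_le_eq)
  ultimately have "r * (2 * Q + 1) ^ c + 1 \<le> (r + 1) * ((2 * Cn + 1) ^ c * (r + 1) ^ c) + (r + 1) * (r + 1) ^ c"
    by linarith
  also have "\<dots> = ((2 * Cn + 1) ^ c + 1) * (r + 1) ^ (c + 1)" by (simp add: algebra_simps)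
  finally have "(r * (2 * Q + 1) ^ c + 1) ^ m \<le> (((2 * Cn + 1) ^ c + 1) * (r + 1) ^ (c + 1)) ^ m"
    by (rule power_mono) simp
  also have "\<dots> = ((2 * Cn + 1) ^ c + 1) ^ m * (r + 1) ^ ((c + 1) * m)"
    by (simp only: power_mult_distrib power_mult)
  finally show ?thesis .
qed

lemma funpow_fix': "f x = x \<Longrightarrow> (f ^^ n) x = x"
  by (induct n) simp_all

lemma fixmult: "(f ^^ k) x = x \<Longrightarrow> (f ^^ (k * j)) x = x"
proof -
  assume "(f ^^ k) x = x"
  hence "((f ^^ k) ^^ j) x = x" by (rule funpow_fix')
  thus ?thesis by (simp only: funpow_mult)
qed

lemma per_fix:
  fixes phi :: "'a \<Rightarrow> 'a"
  assumes n0: "\<forall>m\<ge>n0. {x. (phi ^^ fact m) x = x} = {x. (phi ^^ fact n0) x = x}"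
    and mono: "mono (\<lambda>n. {x. (phi ^^ fact n) x = x})"
    and a: "a \<in> periodic_pts phi"
  shows "(phi ^^ fact n0) a = a"
proof -
  obtain k where k: "k \<ge> 1" "(phi ^^ k) a = a" using a unfolding periodic_pts_def by blast
  have "k dvd fact k" by (rule dvd_fact) (use k(1) in auto)
  then obtain j where j: "fact k = k * j" by (rule dvdE)
  have "(phi ^^ fact k) a = a" unfolding j by (rule fixmult[OF k(2)])
  moreover have "{x. (phi ^^ fact k) x = x} \<subseteq> {x. (phi ^^ fact n0) x = x}"
  proof (cases "k \<ge> n0")
    case True
    hence "{x. (phi ^^ fact k) x = x} = {x. (phi ^^ fact n0) x = x}" using n0 by blast
    thus ?thesis by simp
  next
    case False
    thus ?thesis using monoD[OF mono, of k n0] by simp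
  qed
  ultimately show ?thesis by blast
qed

theorem corollary3p13:
  fixes phi :: "'k::ab_group_add \<Rightarrow> 'k" and S :: "('k \<times> int) set"
  assumes "is_aut phi"
    and "finite S"
    and "symmetric_set phi S"
    and "generates phi S"
  shows "\<exists>p :: real poly. \<forall>r. real (card ((\<lambda>a. (a, 0::int)) ` periodic_pts phi \<inter> word_ball phi S r)) \<le> poly p (real r)"
proof -
  interpret autK phi using assms(1) by unfold_locales
  define A where "A = fst ` S"
  have finA: "finite A" unfolding A_def using assms(2) by simp
  have spanU: "span A = UNIV" unfolding A_def by (rule span_UNIV[OF assms(4)])
  have psi_pow_comm: "(phi ^^ n) (psi x) = psi ((phi ^^ n) x)" for n x
  proof -
    have "(phi ^^ n) (psi x) = psi (phi ((phi ^^ n) (psi x)))" by simp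
    also have "\<dots> = psi ((phi ^^ n) (phi (psi x)))" by (simp only: phi_pow_comm)
    also have "\<dots> = psi ((phi ^^ n) x)" by simp
    finally show ?thesis .
  qed
  define ch1 where "ch1 n = {x. (phi ^^ fact n) x = x}" for n
  have ch1_sub: "submod (ch1 n)" for n
    unfolding submod_def ch1_def
    by (simp add: addf_0[OF addf_funpow[OF addf_phi]] addf_add[OF addf_funpow[OF addf_phi]]
        addf_minus[OF addf_funpow[OF addf_phi]] phi_pow_comm psi_pow_comm)
  have ch1_mono: "mono ch1"
  proof (rule monoI)
    fix n m :: nat assume "n \<le> m"
    hence "fact n dvd (fact m :: nat)" by (rule fact_dvd)
    then obtain j where j: "fact m = fact n * (j::nat)" by blast
    show "ch1 n \<subseteq> ch1 m"
    proof
      fix x assume "x \<in> ch1 n"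
      hence "(phi ^^ fact n) x = x" unfolding ch1_def by simp
      hence "(phi ^^ (fact n * j)) x = x" by (rule fixmult)
      thus "x \<in> ch1 m" unfolding ch1_def j by simp
    qed
  qed
  obtain n0 where n0: "\<forall>m\<ge>n0. ch1 m = ch1 n0" using acc_submod[OF finA spanU ch1_mono ch1_sub] by blast
  define N where "N = (fact n0 :: nat)"
  have N1: "N \<ge> 1" unfolding N_def by (rule fact_ge_1)
  have m1: "mono (\<lambda>n. {x. (phi ^^ fact n) x = x})" using ch1_mono unfolding ch1_def[abs_def] .
  have n0': "\<forall>m\<ge>n0. {x. (phi ^^ fact m) x = x} = {x. (phi ^^ fact n0) x = x}"
    using n0 unfolding ch1_def .
  have Pfix: "(phi ^^ N) a = a" if "a \<in> periodic_pts phi" for a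
    unfolding N_def by (rule per_fix[OF n0' m1 that])
  define dp where "dp = (monom 1 N - 1 :: int poly)"
  have ev_dp: "ev dp x = (phi ^^ N) x - x" for x unfolding dp_def by (simp add: ev_diff ev_monom)
  define ch2 where "ch2 k = {x. ev (dp ^ k) x = 0}" for k
  have ch2_sub: "submod (ch2 n)" for n
    unfolding submod_def ch2_def
    by (simp add: addf_0[OF addf_ev] addf_add[OF addf_ev] addf_minus[OF addf_ev] ev_phi ev_psi
        addf_0[OF addf_psi] addf_0[OF addf_phi])
  have ch2_mono: "mono ch2"
  proof (rule monoI)
    fix n m :: nat assume "n \<le> m"
    then obtain j where m: "m = j + n" by (metis add.commute le_add_diff_inverse)
    show "ch2 n \<subseteq> ch2 m" unfolding ch2_def m
      by (auto simp: power_add ev_mult addf_0[OF addf_ev])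
  qed
  obtain c where c: "\<forall>m\<ge>c. ch2 m = ch2 c" using acc_submod[OF finA spanU ch2_mono ch2_sub] by blast
  have disj: "ev (dp ^ c) y = 0" if "(phi ^^ N) (ev (dp ^ c) y) = ev (dp ^ c) y" for y
  proof -
    have "ev (dp ^ Suc c) y = ev dp (ev (dp ^ c) y)" by (simp only: power_Suc ev_mult)
    also have "\<dots> = 0" by (simp only: ev_dp that diff_self)
    finally have e1: "ev (dp ^ Suc c) y = 0" .
    have "y \<in> ch2 (Suc c)" unfolding ch2_def using e1 by (rule CollectI)
    moreover have "ch2 (Suc c) = ch2 c" by (rule c[rule_format]) simp
    ultimately have "y \<in> ch2 c" by (simp only:)
    thus ?thesis unfolding ch2_def by (rule CollectD)
  qed
  interpret countK phi N c
    by unfold_locales (use N1 disj in \<open>simp_all add: dp_def\<close>)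
  define C where "C = (\<Sum>s\<in>S. \<bar>snd s\<bar>)"
  have C0: "C \<ge> 0" unfolding C_def by (simp add: sum_nonneg)
  define Cn where "Cn = nat C"
  define E where "E = (\<lambda>(s, b). (phi ^^ s) b) ` ({..<N} \<times> A)"
  define m where "m = card E * c"
  define alpha where "alpha = (2 * Cn + 1) ^ c + 1"
  define p where "p = smult (real (alpha ^ m)) ([:1, 1:] ^ ((c + 1) * m))"
  show ?thesis
  proof (intro exI[of _ p] allI)
    fix r
    define X where "X = (\<lambda>a. (a, 0::int)) ` periodic_pts phi \<inter> word_ball phi S r"
    define Q where "Q = nat (C * int r)"
    have QC: "int Q = C * int r" unfolding Q_def using C0 by simp
    have QCn: "Q \<le> Cn * r" unfolding Q_def Cn_def using C0 by (simp add: nat_mult_distrib)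
    have "card X \<le> (r * (2 * Q + 1) ^ c + 1) ^ m"
      unfolding m_def E_def
    proof (rule count[OF finA])
      fix x assume x: "x \<in> X"
      then obtain a where a: "x = (a, 0)" "a \<in> periodic_pts phi" "x \<in> word_ball phi S r"
        unfolding X_def by blast
      obtain L where L: "length L \<le> r" "\<forall>(m, b)\<in>set L. b \<in> fst ` S \<and> \<bar>m\<bar> \<le> C * int r"
        "fst x = sum_list (map (\<lambda>(m, b). phi_pow phi m b) L)"
        using wb_rep[OF assms(2) a(3)] unfolding C_def by blast
      show "snd x = 0 \<and> (phi ^^ N) (fst x) = fst x \<and>
        (\<exists>L. length L \<le> r \<and> (\<forall>(m, b)\<in>set L. b \<in> A \<and> \<bar>m\<bar> \<le> int Q)
           \<and> fst x = sum_list (map (\<lambda>(m, b). phi_pow phi m b) L))"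
        using a Pfix[OF a(2)] L QC unfolding A_def by auto
    qed
    also have "\<dots> \<le> alpha ^ m * (r + 1) ^ ((c + 1) * m)"
      unfolding alpha_def by (rule bound_nat[OF QCn])
    finally have "real (card X) \<le> real (alpha ^ m * (r + 1) ^ ((c + 1) * m))"
      by (simp only: of_nat_le_iff)
    also have "\<dots> = poly p (real r)"
      unfolding p_def by (simp add: poly_power algebra_simps)
    finally show "real (card ((\<lambda>a. (a, 0::int)) ` periodic_pts phi \<inter> word_ball phi S r)) \<le> poly p (real r)"
      unfolding X_def .
  qed
qed


end
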